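(* Let $\mathcal G$ be a temporal graph with vertex set $V$, $|V|=n$, and all labels in $\{1,\dots,\tau\}$, considered with non-strict journeys. Then there exists a temporal graph $\mathcal H$ with the same vertex set $V$, all labels in $\{1,\dots,\tau\}$, and at most $n(n+1)\tau/2$ contacts, such that for all $u,v\in V$ there is a non-strict journey from $u$ to $v$ in $\mathcal G$ if and only if there is a strict journey from $u$ to $v$ in $\mathcal H$. In particular, the non-strict reachability graph of $\mathcal G$ equals the strict reachability graph of $\mathcal H$.
   Context: A temporal graph is a triple $\mathcal G=(V,E,\lambda)$ where $V$ is a finite vertex set, $E$ is a set of undirected edges on $V$, and $\lambda:E\to 2^{\mathbb N}\setminus\{\emptyset\}$ assigns to each edge a nonempty set of presence times. The footprint of $\mathcal G$ is the static graph $(V,E)$. A contact is a pair $(e,t)$ with $e\in E$ and $t\in\lambda(e)$. A journey from $u$ to $v$ is a sequence of contacts $(e_1,t_1),\dots,(e_k,t_k)$, $k\ge 1$, such that $e_1,\dots,e_k$ form a path from $u$ to $v$ in the footprint and $t_1\le t_2\le\dots\le t_k$ (a non-strict journey); it is strict if $t_1<t_2<\dots<t_k$. The reachability graph (with respect to a chosen journey notion) is the directed graph on $V$ having an arc $(u,v)$, $u\neq v$, if and only if there is a journey from $u$ to $v$. *)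

theory Defs
  imports Main
begin

record 'a tgraph =
  verts :: "'a set"
  edges :: "'a set set"
  lab   :: "'a set \<Rightarrow> nat set"

definition temporal_graph :: "'a tgraph \<Rightarrow> bool" where
  "temporal_graph G \<longleftrightarrow> finite (verts G)
     \<and> (\<forall>e\<in>edges G. e \<subseteq> verts G \<and> card e = 2)
     \<and> (\<forall>e\<in>edges G. lab G e \<noteq> {})"

definition contacts :: "'a tgraph \<Rightarrow> ('a set \<times> nat) set" where
  "contacts G = {(e, t). e \<in> edges G \<and> t \<in> lab G e}"

definition labels_within :: "'a tgraph \<Rightarrow> nat \<Rightarrow> bool" where
  "labels_within G \<tau> \<longleftrightarrow> (\<forall>e\<in>edges G. lab G e \<subseteq> {1..\<tau>})"

text \<open>A journey from u to v, given by the vertex sequence vs = [x_0,...,x_k] of a path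
  (distinct vertices, k \<ge> 1) in the footprint and the times ts = [t_1,...,t_k] of
  the contacts ({x_(i-1), x_i}, t_i); ord is the order required between consecutive times
  (\<le> for non-strict, < for strict journeys).\<close>
definition is_journey ::
  "(nat \<Rightarrow> nat \<Rightarrow> bool) \<Rightarrow> 'a tgraph \<Rightarrow> 'a \<Rightarrow> 'a \<Rightarrow> 'a list \<Rightarrow> nat list \<Rightarrow> bool" where
  "is_journey ord G u v vs ts \<longleftrightarrow>
     length vs \<ge> 2 \<and> length ts = length vs - 1
     \<and> hd vs = u \<and> last vs = v \<and> distinct vs
     \<and> (\<forall>i < length ts. {vs ! i, vs ! Suc i} \<in> edges G \<and> ts ! i \<in> lab G {vs ! i, vs ! Suc i})
     \<and> sorted_wrt ord ts"

definition nonstrict_journey :: "'a tgraph \<Rightarrow> 'a \<Rightarrow> 'a \<Rightarrow> bool" where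
  "nonstrict_journey G u v \<longleftrightarrow> (\<exists>vs ts. is_journey (\<le>) G u v vs ts)"

definition strict_journey :: "'a tgraph \<Rightarrow> 'a \<Rightarrow> 'a \<Rightarrow> bool" where
  "strict_journey G u v \<longleftrightarrow> (\<exists>vs ts. is_journey (<) G u v vs ts)"

definition reach_graph :: "('a tgraph \<Rightarrow> 'a \<Rightarrow> 'a \<Rightarrow> bool) \<Rightarrow> 'a tgraph \<Rightarrow> ('a \<times> 'a) set" where
  "reach_graph J G = {(u, v). u \<in> verts G \<and> v \<in> verts G \<and> u \<noteq> v \<and> J G u v}"

end

theory Submission
  imports Defs
begin

inductive rw :: "'a tgraph \<Rightarrow> (nat \<Rightarrow> nat) \<Rightarrow> 'a \<Rightarrow> nat \<Rightarrow> 'a \<Rightarrow> bool" for G nxt where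
  rw_refl: "rw G nxt a t a"
| rw_step: "{a,b} \<in> edges G \<Longrightarrow> s \<in> lab G {a,b} \<Longrightarrow> t \<le> s \<Longrightarrow> rw G nxt b (nxt s) c \<Longrightarrow> rw G nxt a t c"

lemma rw_mono: "rw G nxt a t c \<Longrightarrow> t' \<le> t \<Longrightarrow> rw G nxt a t' c"
proof (induction arbitrary: t' rule: rw.induct)
  case (rw_refl a t)
  show ?case by (rule rw.rw_refl)
next
  case (rw_step a b s t c)
  then show ?case by (meson le_trans rw.rw_step)
qed

lemma journey_drop:
  assumes "is_journey ord G u v vs ts" "j < length ts"
  shows "is_journey ord G (vs ! j) v (drop j vs) (drop j ts)"
  using assms unfolding is_journey_def
  by (auto simp: hd_drop_conv_nth last_drop sorted_wrt_drop distinct_drop add.commute[of j] nth_drop)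

lemma journey_ne:
  assumes "is_journey ord G u v vs ts" shows "u \<noteq> v"
proof -
  have ne: "vs \<noteq> []" using assms unfolding is_journey_def by auto
  have "hd vs = vs ! 0" "last vs = vs ! (length vs - 1)" using ne
    by (auto simp: hd_conv_nth last_conv_nth)
  moreover have "vs ! 0 \<noteq> vs ! (length vs - 1)"
  proof -
    have d: "distinct vs" "2 \<le> length vs" using assms unfolding is_journey_def by auto
    have "0 < length vs" "length vs - 1 < length vs" "0 \<noteq> length vs - 1" using d(2) by auto
    then show ?thesis using nth_eq_iff_index_eq[OF d(1), of 0 "length vs - 1"] by simp
  qed
  ultimately show ?thesis using assms unfolding is_journey_def by auto
qed

lemma J1:
  assumes "is_journey ord G u v vs ts" "\<forall>x y. ord x y \<longleftrightarrow> nxt x \<le> y" "t \<le> hd ts"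
  shows "rw G nxt u t v"
  using assms
proof (induction vs arbitrary: u ts t)
  case Nil
  then show ?case by (simp add: is_journey_def)
next
  case (Cons x vs')
  have ux: "x = u" using Cons.prems by (simp add: is_journey_def)
  obtain t1 ts' where ts: "ts = t1 # ts'" using Cons.prems unfolding is_journey_def
    by (cases ts) auto
  have vne: "vs' \<noteq> []" using Cons.prems by (auto simp: is_journey_def)
  have e: "{u, hd vs'} \<in> edges G" "t1 \<in> lab G {u, hd vs'}"
    using Cons.prems(1) ux ts vne unfolding is_journey_def
    by (auto simp: hd_conv_nth dest: spec[of _ 0])
  show ?case
  proof (cases "ts' = []")
    case True
    then have "vs' = [v]" using Cons.prems(1) ts unfolding is_journey_def
      by (cases vs') auto
    then show ?thesis using e Cons.prems(3) ts
      by (auto intro: rw.rw_step rw.rw_refl)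
  next
    case False
    have j: "is_journey ord G (hd vs') v vs' ts'"
      using journey_drop[OF Cons.prems(1), of 1] ts False vne
      by (auto simp: hd_conv_nth)
    have "nxt t1 \<le> hd ts'" using Cons.prems(1,2) ts False
      unfolding is_journey_def by (cases ts') auto
    then have "rw G nxt (hd vs') (nxt t1) v" using Cons.IH[OF j Cons.prems(2)] by blast
    then show ?thesis using e Cons.prems(3) ts by (auto intro: rw.rw_step)
  qed
qed

lemma J2:
  assumes "rw G nxt a t c" "temporal_graph G" "a \<noteq> c"
    "\<forall>x y. ord x y \<longleftrightarrow> nxt x \<le> y" "\<forall>x. x \<le> nxt x"
  shows "\<exists>vs ts. is_journey ord G a c vs ts \<and> t \<le> hd ts"
  using assms
proof (induction rule: rw.induct)
  case (rw_refl a t)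
  then show ?case by simp
next
  case (rw_step a b s t c)
  have ab: "a \<noteq> b" using rw_step.hyps(1) rw_step.prems(1) unfolding temporal_graph_def
    by (metis card_1_singleton_iff insert_absorb2 numeral_eq_iff semiring_norm(85) One_nat_def numeral_One)
  show ?case
  proof (cases "b = c")
    case True
    have "is_journey ord G a c [a, c] [s]"
      using rw_step.hyps(1,2) True ab unfolding is_journey_def by auto
    then show ?thesis using rw_step.hyps(3) by force
  next
    case False
    then obtain vs ts where j: "is_journey ord G b c vs ts" and h: "nxt s \<le> hd ts"
      using rw_step.IH rw_step.prems by blast
    have hdle: "\<forall>x\<in>set ts. hd ts \<le> x"
    proof -
      have "ts \<noteq> []" using j unfolding is_journey_def by auto
      then obtain y ys where "ts = y # ys" by (cases ts) auto
      moreover have "\<forall>x\<in>set ys. ord y x" using j \<open>ts = y # ys\<close> unfolding is_journey_def by auto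
      ultimately show ?thesis using rw_step.prems(3,4) by (auto intro: le_trans)
    qed
    show ?thesis
    proof (cases "a \<in> set vs")
      case False
      have vsne: "vs \<noteq> []" "hd vs = b" using j unfolding is_journey_def by auto
      have "is_journey ord G a c (a # vs) (s # ts)"
        unfolding is_journey_def
      proof (intro conjI)
        show "2 \<le> length (a # vs)" using vsne by (cases vs) auto
        show "length (s # ts) = length (a # vs) - 1" using j vsne unfolding is_journey_def by auto
        show "hd (a # vs) = a" by simp
        show "last (a # vs) = c" using j vsne unfolding is_journey_def by auto
        show "distinct (a # vs)" using j False unfolding is_journey_def by auto
        show "\<forall>i<length (s # ts). {(a # vs) ! i, (a # vs) ! Suc i} \<in> edges G \<and>
            (s # ts) ! i \<in> lab G {(a # vs) ! i, (a # vs) ! Suc i}"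
        proof (intro allI impI)
          fix i assume "i < length (s # ts)"
          then show "{(a # vs) ! i, (a # vs) ! Suc i} \<in> edges G \<and>
            (s # ts) ! i \<in> lab G {(a # vs) ! i, (a # vs) ! Suc i}"
            using j vsne rw_step.hyps(1,2) unfolding is_journey_def
            by (cases i) (auto simp: hd_conv_nth)
        qed
        show "sorted_wrt ord (s # ts)"
          using j h hdle rw_step.prems(3) unfolding is_journey_def by (auto intro: le_trans)
      qed
      then show ?thesis using rw_step.hyps(3) by force
    next
      case True
      then obtain k where k: "k < length vs" "vs ! k = a" by (meson in_set_conv_nth)
      have "k \<noteq> length vs - 1" using j k rw_step.prems(2) unfolding is_journey_def
        by (metis last_conv_nth list.size(3) not_less0)
      then have kl: "k < length ts" using j k unfolding is_journey_def by auto
      have j2: "is_journey ord G a c (drop k vs) (drop k ts)" using journey_drop[OF j kl] k by simp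
      have "hd (drop k ts) = ts ! k" using kl by (simp add: hd_drop_conv_nth)
      moreover have "hd ts \<le> ts ! k" using hdle kl by auto
      moreover have "s \<le> nxt s" using rw_step.prems(4) by blast
      ultimately have "t \<le> hd (drop k ts)" using h rw_step.hyps(3) by linarith
      then show ?thesis using j2 by blast
    qed
  qed
qed

inductive conn :: "'a tgraph \<Rightarrow> nat \<Rightarrow> 'a \<Rightarrow> 'a \<Rightarrow> bool" for G t where
  c_refl: "conn G t a a"
| c_step: "{a,b} \<in> edges G \<Longrightarrow> t \<in> lab G {a,b} \<Longrightarrow> conn G t b c \<Longrightarrow> conn G t a c"

lemma conn_trans: "conn G t a b \<Longrightarrow> conn G t b c \<Longrightarrow> conn G t a c"
  by (induction rule: conn.induct) (auto intro: conn.intros)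

lemma conn_edge: "{a,b} \<in> edges G \<Longrightarrow> t \<in> lab G {a,b} \<Longrightarrow> conn G t a b"
  by (auto intro: conn.intros)

lemma conn_sym: "conn G t a b \<Longrightarrow> conn G t b a"
proof (induction rule: conn.induct)
  case (c_refl a)
  show ?case by (rule conn.c_refl)
next
  case (c_step a b c)
  have "conn G t b a" using c_step.hyps conn_edge[of b a G t] by (simp add: insert_commute)
  then show ?case using c_step.IH conn_trans by metis
qed

lemma conn_V:
  assumes "conn G t a b" "temporal_graph G" "labels_within G \<tau>" "a \<noteq> b"
  shows "a \<in> verts G \<and> b \<in> verts G \<and> t \<in> {1..\<tau>}"
  using assms
proof (induction rule: conn.induct)
  case (c_refl a)
  then show ?case by simp
next
  case (c_step a b c)
  have l: "lab G {a,b} \<subseteq> {1..\<tau>}" using c_step.hyps(1) c_step.prems(2)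
    unfolding labels_within_def by blast
  have sv: "{a,b} \<subseteq> verts G" using c_step.hyps(1) c_step.prems(1)
    unfolding temporal_graph_def by blast
  have av: "a \<in> verts G" and bv: "b \<in> verts G" using sv by auto
  have tt: "t \<in> {1..\<tau>}" using l c_step.hyps(2) by blast
  show ?case
  proof (cases "b = c")
    case True
    then show ?thesis using av bv tt by simp
  next
    case False
    have "c \<in> verts G" using c_step.IH[OF c_step.prems(1,2) False] by simp
    then show ?thesis using av tt by simp
  qed
qed

lemma conn_rw: "conn G t a b \<Longrightarrow> rw G id b t c \<Longrightarrow> s \<le> t \<Longrightarrow> rw G id a s c"
proof (induction arbitrary: s rule: conn.induct)
  case (c_refl a)
  show ?case by (rule rw_mono[OF c_refl.prems(1) c_refl.prems(2)])
next
  case (c_step a b c')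
  have r: "rw G id b t c" by (rule c_step.IH[OF c_step.prems(1) order.refl])
  have r': "rw G id b (id t) c" using r by (simp only: id_apply)
  show ?case by (rule rw.rw_step[OF c_step.hyps(1,2) c_step.prems(2) r'])
qed

definition Hc :: "'a tgraph \<Rightarrow> 'a tgraph" where
  "Hc G = \<lparr>verts = verts G, edges = {{a,b} | a b. a \<noteq> b \<and> (\<exists>t. conn G t a b)},
     lab = (\<lambda>e. {t. \<exists>a b. e = {a,b} \<and> a \<noteq> b \<and> conn G t a b})\<rparr>"

lemma Hc_edges: "edges (Hc G) = {{a,b} | a b. a \<noteq> b \<and> (\<exists>t. conn G t a b)}"
  by (simp add: Hc_def)

lemma Hc_lab: "lab (Hc G) e = {t. \<exists>a b. e = {a,b} \<and> a \<noteq> b \<and> conn G t a b}"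
  by (simp add: Hc_def)

lemma Hc_edge:
  assumes "conn G t a b" "a \<noteq> b"
  shows "{a,b} \<in> edges (Hc G) \<and> t \<in> lab (Hc G) {a,b}"
proof
  show "{a,b} \<in> edges (Hc G)" unfolding Hc_edges using assms by blast
  show "t \<in> lab (Hc G) {a,b}" unfolding Hc_lab using assms by blast
qed

lemma dirA: "rw G id a t c \<Longrightarrow> conn G t b a \<Longrightarrow> rw (Hc G) Suc b t c"
proof (induction arbitrary: b rule: rw.induct)
  case (rw_refl a t)
  show ?case
  proof (cases "b = a")
    case True then show ?thesis by (simp add: rw.rw_refl)
  next
    case False
    have e: "{b,a} \<in> edges (Hc G)" "t \<in> lab (Hc G) {b,a}"
      using Hc_edge[OF rw_refl.prems False] by auto
    show ?thesis by (rule rw.rw_step[OF e order.refl rw.rw_refl])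
  qed
next
  case (rw_step a a' s t c)
  show ?case
  proof (cases "s = t")
    case True
    have "conn G s b a" using rw_step.prems True by simp
    then have "conn G s b a'" using conn_trans[OF _ conn_edge[OF rw_step.hyps(1,2)]] by blast
    then show ?thesis using rw_step.IH True by simp
  next
    case False
    then have lt: "Suc t \<le> s" using rw_step.hyps(3) by simp
    have "conn G s a a'" using rw_step.hyps(1,2) conn_edge by metis
    then have r: "rw (Hc G) Suc a s c" using rw_step.IH by simp
    show ?thesis
    proof (cases "b = a")
      case True
      then show ?thesis using rw_mono[OF r rw_step.hyps(3)] by simp
    next
      case False
      have e: "{b,a} \<in> edges (Hc G)" "t \<in> lab (Hc G) {b,a}"
        using Hc_edge[OF rw_step.prems False] by auto
      show ?thesis by (rule rw.rw_step[OF e order.refl rw_mono[OF r lt]])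
    qed
  qed
qed

lemma dirB: "rw (Hc G) Suc a t c \<Longrightarrow> rw G id a t c"
proof (induction rule: rw.induct)
  case (rw_refl a t)
  show ?case by (rule rw.rw_refl)
next
  case (rw_step a b s t c)
  have r: "rw G id b s c" using rw_step.IH rw_mono[of G id b "Suc s" c s] by (simp add: id_def)
  obtain a' b' where ab: "{a,b} = {a',b'}" "conn G s a' b'"
    using rw_step.hyps(2) unfolding Hc_lab by blast
  have "conn G s a b" using ab conn_sym by (metis doubleton_eq_iff)
  then show ?case by (rule conn_rw[OF _ r rw_step.hyps(3)])
qed

lemma Hc_tg:
  assumes tg: "temporal_graph G" "labels_within G \<tau>"
  shows "temporal_graph (Hc G) \<and> labels_within (Hc G) \<tau>"
proof -
  have E: "e \<subseteq> verts G \<and> card e = 2 \<and> lab (Hc G) e \<noteq> {} \<and> lab (Hc G) e \<subseteq> {1..\<tau>}"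
    if ein: "e \<in> edges (Hc G)" for e
  proof -
    obtain a b t where ab: "e = {a,b}" "a \<noteq> b" "conn G t a b" using ein unfolding Hc_edges by blast
    have "a \<in> verts G" "b \<in> verts G" using conn_V[OF ab(3) tg ab(2)] by auto
    then have 1: "e \<subseteq> verts G \<and> card e = 2" using ab by auto
    have 2: "t \<in> lab (Hc G) e" unfolding Hc_lab using ab by blast
    have 3: "lab (Hc G) e \<subseteq> {1..\<tau>}"
    proof
      fix s assume "s \<in> lab (Hc G) e"
      then obtain a' b' where "e = {a',b'}" "a' \<noteq> b'" "conn G s a' b'" unfolding Hc_lab by blast
      then show "s \<in> {1..\<tau>}" using conn_V[OF _ tg] by blast
    qed
    show ?thesis using 1 2 3 by blast
  qed
  have vv: "verts (Hc G) = verts G" by (simp add: Hc_def)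
  have fin: "finite (verts (Hc G))" using tg vv unfolding temporal_graph_def by simp
  have T: "temporal_graph (Hc G)" unfolding temporal_graph_def
  proof (intro conjI ballI)
    show "finite (verts (Hc G))" by (rule fin)
  next
    fix e assume "e \<in> edges (Hc G)"
    then show "e \<subseteq> verts (Hc G)" "card e = 2" "lab (Hc G) e \<noteq> {}" using E[of e] vv by simp_all
  qed
  have L: "labels_within (Hc G) \<tau>" unfolding labels_within_def
  proof
    fix e assume "e \<in> edges (Hc G)"
    then show "lab (Hc G) e \<subseteq> {1..\<tau>}" using E[of e] by simp
  qed
  show ?thesis using T L by (rule conjI)
qed

lemma ns_iff: "temporal_graph G \<Longrightarrow> nonstrict_journey G u v \<longleftrightarrow> u \<noteq> v \<and> rw G id u 0 v"
proof
  assume "nonstrict_journey G u v"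
  then obtain vs ts where j: "is_journey (\<le>) G u v vs ts" unfolding nonstrict_journey_def by blast
  have "rw G id u 0 v" by (rule J1[OF j]) auto
  then show "u \<noteq> v \<and> rw G id u 0 v" using journey_ne[OF j] by blast
next
  assume tg: "temporal_graph G" and h: "u \<noteq> v \<and> rw G id u 0 v"
  have "\<exists>vs ts. is_journey (\<le>) G u v vs ts \<and> 0 \<le> hd ts"
    by (rule J2) (use h tg in auto)
  then show "nonstrict_journey G u v" unfolding nonstrict_journey_def by blast
qed

lemma st_iff: "temporal_graph G \<Longrightarrow> strict_journey G u v \<longleftrightarrow> u \<noteq> v \<and> rw G Suc u 0 v"
proof
  assume "strict_journey G u v"
  then obtain vs ts where j: "is_journey (<) G u v vs ts" unfolding strict_journey_def by blast
  have "rw G Suc u 0 v" by (rule J1[OF j]) auto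
  then show "u \<noteq> v \<and> rw G Suc u 0 v" using journey_ne[OF j] by blast
next
  assume tg: "temporal_graph G" and h: "u \<noteq> v \<and> rw G Suc u 0 v"
  have "\<exists>vs ts. is_journey (<) G u v vs ts \<and> 0 \<le> hd ts"
    by (rule J2) (use h tg in auto)
  then show "strict_journey G u v" unfolding strict_journey_def by blast
qed

lemma contacts_bound:
  assumes "temporal_graph G" "labels_within G \<tau>" "card (verts G) = n"
  shows "card (contacts (Hc G)) \<le> n * (n + 1) * \<tau> div 2"
proof -
  have tg: "temporal_graph (Hc G)" "labels_within (Hc G) \<tau>" using Hc_tg assms by auto
  have fin: "finite (verts G)" using assms unfolding temporal_graph_def by auto
  have vv: "verts (Hc G) = verts G" by (simp add: Hc_def)
  have sub: "contacts (Hc G) \<subseteq> {e. e \<subseteq> verts G \<and> card e = 2} \<times> {1..\<tau>}"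
  proof
    fix x assume "x \<in> contacts (Hc G)"
    then obtain e t where x: "x = (e,t)" "e \<in> edges (Hc G)" "t \<in> lab (Hc G) e"
      unfolding contacts_def by blast
    have "e \<subseteq> verts G" "card e = 2" using tg(1) x vv unfolding temporal_graph_def by auto
    moreover have "t \<in> {1..\<tau>}" using tg(2) x unfolding labels_within_def by blast
    ultimately show "x \<in> {e. e \<subseteq> verts G \<and> card e = 2} \<times> {1..\<tau>}" using x by simp
  qed
  have "card (contacts (Hc G)) \<le> card ({e. e \<subseteq> verts G \<and> card e = 2} \<times> {1..\<tau>})"
    by (rule card_mono[OF _ sub]) (simp add: fin)
  also have "\<dots> = (n choose 2) * \<tau>" using n_subsets[OF fin, of 2] assms(3) by (simp add: card_cartesian_product)
  also have "\<dots> = n * (n - 1) * \<tau> div 2"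
  proof -
    have "even (n * (n - 1))" by auto
    then show ?thesis by (simp add: choose_two div_mult_swap mult.commute)
  qed
  also have "\<dots> \<le> n * (n + 1) * \<tau> div 2"
    by (intro div_le_mono mult_le_mono) auto
  finally show ?thesis .
qed

theorem mainTheorem10:
  fixes G :: "'a tgraph" and n \<tau> :: nat
  assumes "temporal_graph G"
    and "card (verts G) = n"
    and "labels_within G \<tau>"
  shows "\<exists>H :: 'a tgraph. temporal_graph H \<and> verts H = verts G \<and> labels_within H \<tau>
           \<and> card (contacts H) \<le> n * (n + 1) * \<tau> div 2
           \<and> (\<forall>u\<in>verts G. \<forall>v\<in>verts G. nonstrict_journey G u v \<longleftrightarrow> strict_journey H u v)
           \<and> reach_graph nonstrict_journey G = reach_graph strict_journey H"
proof -
  have tg: "temporal_graph (Hc G)" "labels_within (Hc G) \<tau>" using Hc_tg assms by auto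
  have eq: "nonstrict_journey G u v \<longleftrightarrow> strict_journey (Hc G) u v" for u v
  proof -
    have "rw G id u 0 v \<longleftrightarrow> rw (Hc G) Suc u 0 v"
      using dirA[of G u 0 v u] conn.c_refl[of G 0 u] dirB[of G u 0 v] by blast
    then show ?thesis using ns_iff[OF assms(1), of u v] st_iff[OF tg(1), of u v] by simp
  qed
  have vv: "verts (Hc G) = verts G" by (simp add: Hc_def)
  have cb: "card (contacts (Hc G)) \<le> n * (n + 1) * \<tau> div 2"
    using contacts_bound[OF assms(1,3,2)] .
  have rg: "reach_graph nonstrict_journey G = reach_graph strict_journey (Hc G)"
    unfolding reach_graph_def vv using eq by simp
  show ?thesis
  proof (rule exI[of _ "Hc G"], intro conjI)
    show "\<forall>u\<in>verts G. \<forall>v\<in>verts G. nonstrict_journey G u v \<longleftrightarrow> strict_journey (Hc G) u v"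
      using eq by blast
  qed (fact tg(1) vv tg(2) cb rg)+
qed

end
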